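(* Let $k \geq 2$ be an integer, let $G$ be a $(k+1)$-connected $(K_2 \cup kK_1)$-free graph, let $a,b \in V(G)$ be distinct, and let $P$ be a longest $ab$-path in $G$. Then every component of $G - V(P)$ consists of a single vertex.
   Context: All graphs are finite, undirected and simple. For graphs $R, R'$, $R \cup R'$ is their disjoint union and $kR$ is the disjoint union of $k$ copies of $R$; $K_n$ is the complete graph on $n$ vertices. A graph $G$ is $R$-free if it contains no induced subgraph isomorphic to $R$. *)

theory Defs
  imports Main
begin

definition simple_graph :: "'a set \<Rightarrow> ('a \<Rightarrow> 'a \<Rightarrow> bool) \<Rightarrow> bool" where
  "simple_graph V E \<longleftrightarrow> finite V \<and> (\<forall>x y. E x y \<longrightarrow> E y x) \<and> (\<forall>x. \<not> E x x)
     \<and> (\<forall>x y. E x y \<longrightarrow> x \<in> V \<and> y \<in> V)"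

definition is_path :: "('a \<Rightarrow> 'a \<Rightarrow> bool) \<Rightarrow> 'a list \<Rightarrow> bool" where
  "is_path E xs \<longleftrightarrow> xs \<noteq> [] \<and> distinct xs \<and> (\<forall>i. Suc i < length xs \<longrightarrow> E (xs ! i) (xs ! Suc i))"

definition path_in :: "'a set \<Rightarrow> ('a \<Rightarrow> 'a \<Rightarrow> bool) \<Rightarrow> 'a \<Rightarrow> 'a \<Rightarrow> 'a list \<Rightarrow> bool" where
  "path_in W E a b xs \<longleftrightarrow> is_path E xs \<and> set xs \<subseteq> W \<and> hd xs = a \<and> last xs = b"

definition connected_on :: "'a set \<Rightarrow> ('a \<Rightarrow> 'a \<Rightarrow> bool) \<Rightarrow> bool" where
  "connected_on W E \<longleftrightarrow> (\<forall>x\<in>W. \<forall>y\<in>W. \<exists>xs. path_in W E x y xs)"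

definition k_connected :: "nat \<Rightarrow> 'a set \<Rightarrow> ('a \<Rightarrow> 'a \<Rightarrow> bool) \<Rightarrow> bool" where
  "k_connected k V E \<longleftrightarrow> card V > k \<and>
     (\<forall>X. X \<subseteq> V \<and> card X < k \<longrightarrow> connected_on (V - X) E)"

definition component_of :: "'a set \<Rightarrow> ('a \<Rightarrow> 'a \<Rightarrow> bool) \<Rightarrow> 'a set \<Rightarrow> bool" where
  "component_of W E C \<longleftrightarrow> C \<noteq> {} \<and> C \<subseteq> W \<and> connected_on C E \<and>
     (\<forall>D. C \<subseteq> D \<and> D \<subseteq> W \<and> connected_on D E \<longrightarrow> D = C)"

definition has_induced_K2_kK1 :: "nat \<Rightarrow> 'a set \<Rightarrow> ('a \<Rightarrow> 'a \<Rightarrow> bool) \<Rightarrow> bool" where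
  "has_induced_K2_kK1 k V E \<longleftrightarrow> (\<exists>u v I. u \<in> V \<and> v \<in> V \<and> E u v \<and> I \<subseteq> V \<and> card I = k
     \<and> u \<notin> I \<and> v \<notin> I \<and> (\<forall>x\<in>I. \<forall>y\<in>I. \<not> E x y)
     \<and> (\<forall>x\<in>I. \<not> E u x \<and> \<not> E v x))"

end

theory Submission imports Defs begin

lemma is_path_iff: "is_path E xs \<longleftrightarrow> xs \<noteq> [] \<and> distinct xs \<and> successively E xs"
  by (simp add: is_path_def successively_conv_nth)

lemma path_rev:
  assumes "\<forall>x y. E x y \<longrightarrow> E y x" "path_in W E x y Q"
  shows "path_in W E y x (rev Q)"
proof -
  have "successively (\<lambda>x y. E y x) Q = successively E Q"
    by (rule successively_cong) (use assms(1) in auto)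
  then show ?thesis using assms(2)
    by (auto simp: path_in_def is_path_iff hd_rev last_rev)
qed

lemma exit_lemma:
  "R \<noteq> [] \<Longrightarrow> hd R \<in> C \<Longrightarrow> last R \<notin> C \<Longrightarrow> \<exists>i. Suc i < length R \<and> R!i \<in> C \<and> R!Suc i \<notin> C"
proof (induction R)
  case Nil then show ?case by simp
next
  case (Cons x R)
  show ?case
  proof (cases "R = []")
    case True then show ?thesis using Cons by simp
  next
    case False
    show ?thesis
    proof (cases "hd R \<in> C")
      case True
      with Cons.IH False Cons.prems obtain i where "Suc i < length R" "R!i \<in> C" "R!Suc i \<notin> C" by auto
      then show ?thesis by (intro exI[of _ "Suc i"]) auto
    next
      case f: False
      then show ?thesis using Cons.prems False by (intro exI[of _ 0]) (auto simp: hd_conv_nth)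
    qed
  qed
qed

lemma insert_path:
  assumes "is_path E P" "Suc i < length P" "is_path E Q" "set Q \<inter> set P = {}"
    "E (P!i) (hd Q)" "E (last Q) (P!Suc i)"
  defines "R \<equiv> take (Suc i) P @ Q @ drop (Suc i) P"
  shows "is_path E R \<and> hd R = hd P \<and> last R = last P \<and> length R = length P + length Q
    \<and> set R \<subseteq> set P \<union> set Q"
proof -
  have P: "P = take (Suc i) P @ drop (Suc i) P" by simp
  have d: "distinct P" "successively E P" "distinct Q" "successively E Q" "Q \<noteq> []"
    using assms(1,3) by (auto simp: is_path_iff)
  have s1: "successively E (take (Suc i) P)" "successively E (drop (Suc i) P)"
    using d(2) P successively_append_iff by metis+
  have dd: "distinct (take (Suc i) P)" "distinct (drop (Suc i) P)"
       "set (take (Suc i) P) \<inter> set (drop (Suc i) P) = {}"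
    using d(1) P distinct_append by metis+
  have st: "set (take (Suc i) P) \<subseteq> set P" "set (drop (Suc i) P) \<subseteq> set P"
    by (auto dest: in_set_takeD in_set_dropD)
  have l1: "last (take (Suc i) P) = P ! i" using assms(2)
    by (simp add: take_Suc_conv_app_nth)
  have h1: "hd (drop (Suc i) P) = P ! Suc i" using assms(2)
    by (simp add: hd_drop_conv_nth)
  have ne: "take (Suc i) P \<noteq> []" "drop (Suc i) P \<noteq> []" using assms(2) by auto
  have "successively E R"
    unfolding R_def using s1 d(4) l1 h1 ne d(5) assms(5,6)
    by (simp add: successively_append_iff)
  moreover have "distinct R"
    unfolding R_def using dd d(3) st assms(4) by auto
  moreover have "hd R = hd P" unfolding R_def using ne assms(2)
    by (simp add: hd_append hd_take)
  moreover have "last R = last P" unfolding R_def using ne assms(2)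
    by (simp add: last_append)
  moreover have "length R = length P + length Q" unfolding R_def using assms(2) by simp
  moreover have "set R \<subseteq> set P \<union> set Q" unfolding R_def using st by auto
  ultimately show ?thesis using ne by (simp add: is_path_iff R_def)
qed

lemma reroute_path:
  assumes sym: "\<forall>x y. E x y \<longrightarrow> E y x"
    and "is_path E P" "Suc i < j" "Suc j < length P" "is_path E Q" "set Q \<inter> set P = {}"
    "E (P!i) (hd Q)" "E (last Q) (P!j)" "E (P!Suc i) (P!Suc j)"
  defines "M \<equiv> drop (Suc i) (take (Suc j) P)"
  defines "R \<equiv> take (Suc i) P @ Q @ rev M @ drop (Suc j) P"
  shows "is_path E R \<and> hd R = hd P \<and> last R = last P \<and> length R = length P + length Q
    \<and> set R \<subseteq> set P \<union> set Q"
proof -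
  have T: "take (Suc i) P @ M = take (Suc j) P"
  proof -
    have "take (Suc i) (take (Suc j) P) = take (Suc i) P" using assms(3) by (simp add: min_def)
    then show ?thesis unfolding M_def by (metis append_take_drop_id)
  qed
  have P: "P = take (Suc i) P @ M @ drop (Suc j) P" using T by (metis append_assoc append_take_drop_id)
  have d: "distinct P" "successively E P" "distinct Q" "successively E Q" "Q \<noteq> []"
    using assms(2,5) by (auto simp: is_path_iff)
  have s1: "successively E (take (Suc i) P)" "successively E M" "successively E (drop (Suc j) P)"
    using d(2) P successively_append_iff by metis+
  have srev: "successively E (rev M)"
  proof -
    have "successively (\<lambda>x y. E y x) M = successively E M"
      by (rule successively_cong) (use sym in auto)
    then show ?thesis using s1(2) by simp
  qed
  have dd: "distinct (take (Suc i) P)" "distinct M" "distinct (drop (Suc j) P)"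
       "set (take (Suc i) P) \<inter> set M = {}" "set (take (Suc i) P) \<inter> set (drop (Suc j) P) = {}"
       "set M \<inter> set (drop (Suc j) P) = {}"
    using d(1) P by (metis Int_Un_distrib distinct_append set_append sup_eq_bot_iff)+
  have "set P = set (take (Suc i) P) \<union> set M \<union> set (drop (Suc j) P)" using P
    by (metis Un_assoc set_append)
  then have st: "set (take (Suc i) P) \<subseteq> set P" "set M \<subseteq> set P" "set (drop (Suc j) P) \<subseteq> set P"
    by auto
  have lM: "length M = j - i" unfolding M_def using assms(3,4) by simp
  have l1: "last (take (Suc i) P) = P ! i" using assms(3,4)
    by (simp add: take_Suc_conv_app_nth)
  have h4: "hd (drop (Suc j) P) = P ! Suc j" using assms(4)
    by (simp add: hd_drop_conv_nth)
  have hM: "hd (rev M) = P ! j"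
  proof -
    have "hd (rev M) = last M" by (simp add: hd_rev)
    also have "\<dots> = M ! (j - i - 1)" using lM assms(3) by (subst last_conv_nth) auto
    also have "\<dots> = P ! j" unfolding M_def using assms(3,4) by simp
    finally show ?thesis .
  qed
  have lM2: "last (rev M) = P ! Suc i"
  proof -
    have "last (rev M) = hd M" by (simp add: last_rev)
    also have "\<dots> = M ! 0" using lM assms(3) by (subst hd_conv_nth) auto
    also have "\<dots> = P ! Suc i" unfolding M_def using assms(3,4) by simp
    finally show ?thesis .
  qed
  have ne: "take (Suc i) P \<noteq> []" "drop (Suc j) P \<noteq> []" "rev M \<noteq> []" using assms(3,4) lM by auto
  have "successively E R"
    unfolding R_def using s1 srev d(4) l1 h4 hM lM2 ne d(5) assms(7,8,9) sym
    by (simp add: successively_append_iff)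
  moreover have "distinct R"
    unfolding R_def using dd d(3) st assms(6) by auto
  moreover have "hd R = hd P" unfolding R_def using ne assms(4)
    by (simp add: hd_append hd_take)
  moreover have "last R = last P" unfolding R_def using ne assms(4)
    by (simp add: last_append)
  moreover have "length R = length P + length Q" unfolding R_def using assms(3,4) lM by simp
  moreover have "set R \<subseteq> set P \<union> set Q" unfolding R_def using st by auto
  ultimately show ?thesis using ne by (simp add: is_path_iff R_def)
qed

lemma path_mono: "path_in W E x y Q \<Longrightarrow> W \<subseteq> W' \<Longrightarrow> path_in W' E x y Q"
  by (auto simp: path_in_def)

lemma path_ext:
  assumes "path_in W E x z Q" "E z w" "w \<notin> set Q"
  shows "path_in (insert w W) E x w (Q @ [w])"
proof -
  have "Q \<noteq> []" "last Q = z" "distinct Q" "successively E Q" "set Q \<subseteq> W" "hd Q = x"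
    using assms(1) by (auto simp: path_in_def is_path_iff)
  then show ?thesis using assms(2,3) unfolding path_in_def is_path_iff
    by (simp add: successively_append_iff) blast
qed


lemma connected_insert:
  assumes sym: "\<forall>x y. E x y \<longrightarrow> E y x"
    and conn: "connected_on C E" and zC: "z \<in> C" and zw: "E z w" and wC: "w \<notin> C"
  shows "connected_on (insert w C) E"
proof -
  have one: "\<exists>Q. path_in (insert w C) E x w Q" if xC: "x \<in> C" for x
  proof -
    from conn zC xC obtain Q where Q: "path_in C E x z Q" unfolding connected_on_def by blast
    then have "w \<notin> set Q" using wC unfolding path_in_def by blast
    then have "path_in (insert w C) E x w (Q @ [w])" by (rule path_ext[OF Q zw])
    then show ?thesis by (rule exI)
  qed
  show ?thesis unfolding connected_on_def
  proof (intro ballI)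
    fix x y assume x: "x \<in> insert w C" and y: "y \<in> insert w C"
    show "\<exists>xs. path_in (insert w C) E x y xs"
    proof (cases "x = w")
      case True
      show ?thesis
      proof (cases "y = w")
        case True
        then have "path_in (insert w C) E x y [w]" using \<open>x = w\<close> by (auto simp: path_in_def is_path_def)
        then show ?thesis by (rule exI)
      next
        case False
        then have "y \<in> C" using y by auto
        then obtain Q where "path_in (insert w C) E y w Q" using one by blast
        then have "path_in (insert w C) E w y (rev Q)" by (rule path_rev[OF sym])
        then show ?thesis using True by blast
      qed
    next
      case False
      then have xC: "x \<in> C" using x by auto
      show ?thesis
      proof (cases "y = w")
        case True
        then show ?thesis using one[OF xC] by simp
      next
        case False
        then have yC: "y \<in> C" using y by auto
        from conn xC yC obtain Q where "path_in C E x y Q" unfolding connected_on_def by blast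
        then have "path_in (insert w C) E x y Q" by (rule path_mono) auto
        then show ?thesis by (rule exI)
      qed
    qed
  qed
qed


theorem mainTheorem9:
  fixes V :: "'a set" and E :: "'a \<Rightarrow> 'a \<Rightarrow> bool" and k :: nat and a b :: 'a and P :: "'a list"
  assumes "k \<ge> 2"
    and "simple_graph V E"
    and "k_connected (k + 1) V E"
    and "\<not> has_induced_K2_kK1 k V E"
    and "a \<in> V" and "b \<in> V" and "a \<noteq> b"
    and "path_in V E a b P"
    and "\<forall>Q. path_in V E a b Q \<longrightarrow> length Q \<le> length P"
  shows "\<forall>C. component_of (V - set P) E C \<longrightarrow> card C = 1"
proof (intro allI impI)
  fix C assume comp: "component_of (V - set P) E C"
  have sym: "\<forall>x y. E x y \<longrightarrow> E y x" and irr: "\<And>x. \<not> E x x" and finV: "finite V"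
    using assms(2) unfolding simple_graph_def by auto
  have Cne: "C \<noteq> {}" and CV: "C \<subseteq> V - set P" and conn: "connected_on C E"
    and maxi: "\<And>D. C \<subseteq> D \<Longrightarrow> D \<subseteq> V - set P \<Longrightarrow> connected_on D E \<Longrightarrow> D = C"
    using comp unfolding component_of_def by blast+
  have Pp: "is_path E P" "set P \<subseteq> V" "hd P = a" "last P = b"
    using assms(8) unfolding path_in_def by auto
  have Pd: "distinct P" "P \<noteq> []" using Pp(1) unfolding is_path_def by auto
  have lenP: "length P \<ge> 2"
  proof (rule ccontr)
    assume "\<not> 2 \<le> length P"
    moreover have "length P \<noteq> 0" using Pd(2) by simp
    ultimately have "length P = 1" by arith
    then obtain x where "P = [x]" by (metis One_nat_def length_0_conv length_Suc_conv)
    then show False using Pp assms(7) by simp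
  qed
  have CP: "\<And>x. x \<in> C \<Longrightarrow> x \<notin> set P" using CV by blast
  have longest: "\<And>R. path_in V E a b R \<Longrightarrow> length R \<le> length P" using assms(9) by blast
  show "card C = 1"
  proof (rule ccontr)
    assume c1: "card C \<noteq> 1"
    have finC: "finite C" using CV finV finite_subset by blast
    obtain u0 where u0: "u0 \<in> C" using Cne by blast
    have "C \<noteq> {u0}" using c1 by auto
    then obtain v0 where v0: "v0 \<in> C" "v0 \<noteq> u0" using u0 by blast
    obtain Q0 where Q0: "path_in C E u0 v0 Q0" using conn u0 v0 unfolding connected_on_def by blast
    have "length Q0 \<ge> 2"
    proof (rule ccontr)
      assume "\<not> 2 \<le> length Q0"
      moreover have "Q0 \<noteq> []" using Q0 unfolding path_in_def is_path_def by auto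
      ultimately have "length Q0 = 1" by (cases "length Q0") auto
      then obtain x where "Q0 = [x]" by (metis One_nat_def length_0_conv length_Suc_conv)
      then show False using Q0 v0 unfolding path_in_def by auto
    qed
    define u where "u = Q0 ! 0"
    define v where "v = Q0 ! 1"
    have uvC: "u \<in> C" "v \<in> C" using Q0 \<open>length Q0 \<ge> 2\<close> unfolding u_def v_def path_in_def
      by (auto intro!: subsetD[of "set Q0" C] nth_mem)
    have Euv: "E u v" using Q0 \<open>length Q0 \<ge> 2\<close> unfolding u_def v_def path_in_def is_path_def
      by (metis One_nat_def Suc_1 Suc_le_lessD)
    define N where "N = {x \<in> set P. \<exists>h\<in>C. E x h}"
    have NP: "N \<subseteq> set P" unfolding N_def by auto
    have noconsec: "\<not> (P!i \<in> N \<and> P!Suc i \<in> N)" if i: "Suc i < length P" for i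
    proof
      assume "P!i \<in> N \<and> P!Suc i \<in> N"
      then obtain h1 h2 where h: "h1 \<in> C" "h2 \<in> C" "E (P!i) h1" "E (P!Suc i) h2"
        unfolding N_def by blast
      obtain Q where Q: "path_in C E h1 h2 Q" using conn h unfolding connected_on_def by blast
      have Qp: "is_path E Q" "set Q \<subseteq> C" "hd Q = h1" "last Q = h2" "Q \<noteq> []"
        using Q unfolding path_in_def is_path_def by auto
      have disj: "set Q \<inter> set P = {}" using Qp(2) CP by blast
      have "E (last Q) (P!Suc i)" using Qp(4) h(4) sym by blast
      then have R: "is_path E (take (Suc i) P @ Q @ drop (Suc i) P) \<and>
          hd (take (Suc i) P @ Q @ drop (Suc i) P) = hd P \<and>
          last (take (Suc i) P @ Q @ drop (Suc i) P) = last P \<and>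
          length (take (Suc i) P @ Q @ drop (Suc i) P) = length P + length Q \<and>
          set (take (Suc i) P @ Q @ drop (Suc i) P) \<subseteq> set P \<union> set Q"
        using insert_path[OF Pp(1) i Qp(1) disj] h(3) Qp(3) by blast
      have "path_in V E a b (take (Suc i) P @ Q @ drop (Suc i) P)"
        unfolding path_in_def using R Pp Qp(2) CV by blast
      then have "length P + length Q \<le> length P" using longest R by metis
      then show False using Qp(5) by simp
    qed
    have cardN: "k + 1 \<le> card N"
    proof (rule ccontr)
      assume "\<not> k + 1 \<le> card N"
      then have "card N < k + 1" by simp
      moreover have "N \<subseteq> V" using NP Pp(2) by blast
      ultimately have cN: "connected_on (V - N) E" using assms(3) unfolding k_connected_def by blast
      have "\<not> (P!0 \<in> N \<and> P!Suc 0 \<in> N)" using noconsec[of 0] lenP by simp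
      then obtain y where y: "y \<in> set P" "y \<notin> N" using lenP
        by (metis One_nat_def Suc_1 Suc_le_lessD less_trans nth_mem zero_less_Suc)
      have uVN: "u \<in> V - N" using uvC CV NP by blast
      have yVN: "y \<in> V - N" using y Pp(2) by blast
      obtain R where R: "path_in (V - N) E u y R" using cN uVN yVN unfolding connected_on_def by blast
      have Rp: "R \<noteq> []" "hd R = u" "last R = y" "set R \<subseteq> V - N"
        "\<And>j. Suc j < length R \<Longrightarrow> E (R!j) (R!Suc j)"
        using R unfolding path_in_def is_path_def by auto
      obtain j where j: "Suc j < length R" "R!j \<in> C" "R!Suc j \<notin> C"
        using exit_lemma[of R C] Rp(1,2,3) uvC(1) CP y(1) by blast
      define w where "w = R ! Suc j"
      have wVN: "w \<in> V - N" unfolding w_def using Rp(4) j(1) nth_mem by blast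
      have Ew: "E (R!j) w" unfolding w_def using Rp(5) j(1) by blast
      show False
      proof (cases "w \<in> set P")
        case True
        then have "w \<in> N" unfolding N_def using Ew sym j(2) by blast
        then show False using wVN by blast
      next
        case False
        have "connected_on (insert w C) E"
          by (rule connected_insert[OF sym conn j(2) Ew]) (use j(3) w_def in simp)
        moreover have "insert w C \<subseteq> V - set P" using CV wVN False by blast
        ultimately have "insert w C = C" using maxi by blast
        then show False using j(3) w_def by blast
      qed
    qed
    define J where "J = {i. Suc i < length P \<and> P!i \<in> N}"
    have finJ: "finite J" unfolding J_def by (rule finite_subset[of _ "{..<length P}"]) auto
    have "N \<subseteq> (\<lambda>i. P!i) ` (insert (length P - 1) J)"
    proof
      fix x assume x: "x \<in> N"
      then obtain i where i: "i < length P" "x = P!i" using NP by (metis in_set_conv_nth subsetD)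
      show "x \<in> (\<lambda>i. P!i) ` (insert (length P - 1) J)"
      proof (cases "Suc i < length P")
        case True then have "i \<in> J" unfolding J_def using x i by auto
        then show ?thesis using i by blast
      next
        case False then have "i = length P - 1" using i by simp
        then show ?thesis using i by blast
      qed
    qed
    then have "card N \<le> card ((\<lambda>i. P!i) ` (insert (length P - 1) J))"
      using finJ by (intro card_mono) auto
    also have "\<dots> \<le> card (insert (length P - 1) J)" by (rule card_image_le) (use finJ in simp)
    also have "\<dots> \<le> Suc (card J)" using finJ by (simp add: card_insert_if)
    finally have "k \<le> card J" using cardN by simp
    then obtain J' where J': "J' \<subseteq> J" "card J' = k" "finite J'" by (rule obtain_subset_with_card_n)
    define I where "I = (\<lambda>i. P ! Suc i) ` J'"
    have inj: "inj_on (\<lambda>i. P ! Suc i) J'"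
    proof (rule inj_onI)
      fix i j assume "i \<in> J'" "j \<in> J'" "P ! Suc i = P ! Suc j"
      moreover have "Suc i < length P" "Suc j < length P" using \<open>i \<in> J'\<close> \<open>j \<in> J'\<close> J' unfolding J_def by auto
      ultimately show "i = j" using Pd(1) nth_eq_iff_index_eq by (metis Suc_inject)
    qed
    have cardI: "card I = k" unfolding I_def using card_image[OF inj] J' by simp
    have IP: "I \<subseteq> set P" unfolding I_def using J' unfolding J_def by auto
    have nonadj: "\<not> E h (P ! Suc i)" if "i \<in> J" "h \<in> C" for i h
    proof
      assume "E h (P ! Suc i)"
      then have "P ! Suc i \<in> N" unfolding N_def using sym that J_def by auto
      then show False using noconsec[of i] that unfolding J_def by auto
    qed
    have indep: "\<not> E (P!Suc i) (P!Suc j)" if ij: "i \<in> J" "j \<in> J" "i < j" for i j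
    proof
      assume e: "E (P!Suc i) (P!Suc j)"
      have "Suc i \<noteq> j" using noconsec[of i] ij unfolding J_def by auto
      then have sij: "Suc i < j" using ij by simp
      have sj: "Suc j < length P" using ij unfolding J_def by auto
      obtain h1 h2 where h: "h1 \<in> C" "h2 \<in> C" "E (P!i) h1" "E (P!j) h2"
        using ij unfolding J_def N_def by blast
      obtain Q where Q: "path_in C E h1 h2 Q" using conn h unfolding connected_on_def by blast
      have Qp: "is_path E Q" "set Q \<subseteq> C" "hd Q = h1" "last Q = h2" "Q \<noteq> []"
        using Q unfolding path_in_def is_path_def by auto
      have disj: "set Q \<inter> set P = {}" using Qp(2) CP by blast
      have "E (last Q) (P!j)" using Qp(4) h(4) sym by blast
      define R where "R = take (Suc i) P @ Q @ rev (drop (Suc i) (take (Suc j) P)) @ drop (Suc j) P"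
      have R: "is_path E R \<and> hd R = hd P \<and> last R = last P \<and> length R = length P + length Q
          \<and> set R \<subseteq> set P \<union> set Q"
        unfolding R_def
        using reroute_path[OF sym Pp(1) sij sj Qp(1) disj] h(3) Qp(3) \<open>E (last Q) (P!j)\<close> e by blast
      have "path_in V E a b R"
        unfolding path_in_def using R Pp Qp(2) CV by blast
      then have "length P + length Q \<le> length P" using longest R by metis
      then show False using Qp(5) by simp
    qed
    have "has_induced_K2_kK1 k V E"
      unfolding has_induced_K2_kK1_def
    proof (intro exI conjI)
      show "u \<in> V" "v \<in> V" using uvC CV by auto
      show "E u v" by (rule Euv)
      show "I \<subseteq> V" using IP Pp(2) by blast
      show "card I = k" by (rule cardI)
      show "u \<notin> I" "v \<notin> I" using IP uvC CP by auto
      show "\<forall>x\<in>I. \<forall>y\<in>I. \<not> E x y"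
      proof (intro ballI)
        fix x y assume "x \<in> I" "y \<in> I"
        then obtain i j where ij: "i \<in> J" "j \<in> J" "x = P ! Suc i" "y = P ! Suc j"
          unfolding I_def using J' by blast
        show "\<not> E x y"
        proof (cases i j rule: linorder_cases)
          case less then show ?thesis using indep ij by blast
        next
          case equal then show ?thesis using irr ij by simp
        next
          case greater then show ?thesis using indep[of j i] ij sym by blast
        qed
      qed
      show "\<forall>x\<in>I. \<not> E u x \<and> \<not> E v x"
        unfolding I_def using nonadj uvC J' by blast
    qed
    then show False using assms(4) by blast
  qed
qed

end
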